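(* Let $T:\mathbb{R}^n\to\mathbb{R}^m$ and $S:\mathbb{R}^m\to\mathbb{R}^k$ be linear maps and $1\le p\le\infty$. Then $\|ST\|_p\le\sigma_1(T)\|S\|_p$. Moreover, if $S$ is injective and $p<\infty$, then equality holds if and only if $\sigma_1(T)=\sigma_m(T)$.
   Context: For a linear map $A:\mathbb{R}^a\to\mathbb{R}^b$ (Euclidean norms), its singular values are $\sigma_i(A)=\max\{\min\{|Au|:u\in U,|u|=1\}:U\subseteq\mathbb{R}^a,\ \dim U=i\}$ for $1\le i\le a$, and $\sigma_i(A)=0$ for $i>a$; thus $\sigma_1(A)\ge\sigma_2(A)\ge\cdots\ge0$ (equivalently, the singular values from a singular value decomposition, padded with zeros). The Schatten $p$-norm is $\|A\|_p=(\sum_i\sigma_i(A)^p)^{1/p}$ for $1\le p<\infty$, and $\|A\|_\infty=\sigma_1(A)$. *)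

theory Defs
  imports "HOL-Analysis.Analysis"
begin

text \<open>Singular values of a linear map A between Euclidean spaces, via the
  max-min characterisation: for 1 <= i <= dim of the domain,
  sigma_i(A) = max over i-dimensional subspaces U of min of |A u| over unit u in U;
  sigma_i(A) = 0 otherwise (in particular for i > dim of the domain).
  The max and min are attained (compactness), so Sup and Inf are used.\<close>
definition singular_value :: "('a::euclidean_space \<Rightarrow> 'b::real_normed_vector) \<Rightarrow> nat \<Rightarrow> real" where
  "singular_value A i =
     (if 1 \<le> i \<and> i \<le> DIM('a)
      then Sup {Inf {norm (A u) | u. u \<in> U \<and> norm u = 1} | U. subspace U \<and> dim U = i}
      else 0)"

text \<open>Schatten p-norm, 1 <= p <= infinity (p as an extended real).  For finite p the
  sum over all i reduces to i = 1..DIM of the domain since the others vanish.\<close>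
definition schatten_norm :: "ereal \<Rightarrow> ('a::euclidean_space \<Rightarrow> 'b::real_normed_vector) \<Rightarrow> real" where
  "schatten_norm p A =
     (if p = \<infinity> then singular_value A 1
      else (\<Sum>i = 1..DIM('a). singular_value A i powr real_of_ereal p) powr (1 / real_of_ereal p))"

end

theory Submission
  imports Defs
begin


lemma sv_nonzero_in_subspace:
  fixes U :: "'a::euclidean_space set"
  assumes "subspace U" "dim U \<ge> 1"
  shows "\<exists>u\<in>U. norm u = 1"
proof -
  have "\<not> U \<subseteq> {0}" using assms(2) dim_eq_0[of U] by linarith
  then obtain x where x: "x \<in> U" "x \<noteq> 0" by blast
  have "x /\<^sub>R norm x \<in> U" using x assms(1) by (simp add: subspace_scale)
  moreover have "norm (x /\<^sub>R norm x) = 1" using x by simp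
  ultimately show ?thesis by blast
qed

lemma sv_lower:
  fixes A :: "'a::euclidean_space \<Rightarrow> 'b::euclidean_space"
  assumes lin: "linear A" and U: "subspace U" "dim U = i" and i: "1 \<le> i" "i \<le> DIM('a)"
    and bnd: "\<And>u. u \<in> U \<Longrightarrow> a * norm u \<le> norm (A u)"
  shows "a \<le> singular_value A i"
proof -
  obtain B where B: "B > 0" "\<And>x. norm (A x) \<le> B * norm x" using linear_bounded_pos[OF lin] by blast
  define Y where "Y = (\<lambda>U. {norm (A u) | u. u \<in> U \<and> norm u = 1})"
  define X where "X = {Inf (Y U) | U. subspace U \<and> dim U = i}"
  have sv: "singular_value A i = Sup X" using i unfolding singular_value_def X_def Y_def by (intro if_P) simp
  have Yne: "Y U' \<noteq> {}" if "subspace U'" "dim U' = i" for U'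
    using sv_nonzero_in_subspace[of U'] that i unfolding Y_def by auto
  have Ybd: "bdd_below (Y U')" for U' unfolding Y_def by (rule bdd_belowI[of _ 0]) auto
  have "a \<le> Inf (Y U)"
  proof (rule cInf_greatest)
    show "Y U \<noteq> {}" using Yne[OF U] .
    fix x assume "x \<in> Y U"
    then obtain u where "u \<in> U" "norm u = 1" "x = norm (A u)" unfolding Y_def by blast
    then show "a \<le> x" using bnd[of u] by simp
  qed
  moreover have "Inf (Y U) \<in> X" using U unfolding X_def by blast
  moreover have "bdd_above X"
  proof (rule bdd_aboveI[of _ B])
    fix x assume "x \<in> X"
    then obtain U' where U': "subspace U'" "dim U' = i" "x = Inf (Y U')" unfolding X_def by blast
    then obtain u where u: "u \<in> U'" "norm u = 1" using sv_nonzero_in_subspace[of U'] i by auto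
    have "Inf (Y U') \<le> norm (A u)" by (rule cInf_lower) (use u Ybd in \<open>auto simp: Y_def\<close>)
    also have "\<dots> \<le> B" using B(2)[of u] u by simp
    finally show "x \<le> B" using U' by simp
  qed
  ultimately show ?thesis unfolding sv by (meson cSup_upper order_trans)
qed

lemma sv_upper:
  fixes A :: "'a::euclidean_space \<Rightarrow> 'b::euclidean_space"
  assumes a: "0 \<le> a"
    and H: "\<And>U. subspace U \<Longrightarrow> dim U = i \<Longrightarrow> \<exists>u\<in>U. norm u = 1 \<and> norm (A u) \<le> a"
  shows "singular_value A i \<le> a"
proof (cases "1 \<le> i \<and> i \<le> DIM('a)")
  case False then have "singular_value A i = 0" unfolding singular_value_def by (rule if_not_P)
  then show ?thesis using a by simp
next
  case True
  define Y where "Y = (\<lambda>U. {norm (A u) | u. u \<in> U \<and> norm u = 1})"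
  define X where "X = {Inf (Y U) | U. subspace U \<and> dim U = i}"
  have sv: "singular_value A i = Sup X" using True unfolding singular_value_def X_def Y_def by (intro if_P) simp
  have Ybd: "bdd_below (Y U')" for U' unfolding Y_def by (rule bdd_belowI[of _ 0]) auto
  obtain U0 :: "'a set" where "subspace U0" "dim U0 = i"
  proof (rule choose_subspace_of_subspace[of i "UNIV::'a set"])
    show "i \<le> dim (UNIV::'a set)" using True by simp
  qed
  then have "X \<noteq> {}" unfolding X_def by blast
  moreover have "x \<le> a" if "x \<in> X" for x
  proof -
    obtain U' where U': "subspace U'" "dim U' = i" "x = Inf (Y U')" using \<open>x \<in> X\<close> unfolding X_def by blast
    obtain u where u: "u \<in> U'" "norm u = 1" "norm (A u) \<le> a" using H[OF U'(1,2)] by blast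
    have "Inf (Y U') \<le> norm (A u)" by (rule cInf_lower) (use u Ybd in \<open>auto simp: Y_def\<close>)
    then show ?thesis using u U' by simp
  qed
  ultimately show ?thesis unfolding sv by (rule cSup_least)
qed

lemma sv_nonneg:
  fixes A :: "'a::euclidean_space \<Rightarrow> 'b::euclidean_space"
  assumes "linear A"
  shows "0 \<le> singular_value A i"
proof (cases "1 \<le> i \<and> i \<le> DIM('a)")
  case False then have "singular_value A i = 0" unfolding singular_value_def by (rule if_not_P)
  then show ?thesis by simp
next
  case True
  obtain U0 :: "'a set" where "subspace U0" "dim U0 = i"
  proof (rule choose_subspace_of_subspace[of i "UNIV::'a set"])
    show "i \<le> dim (UNIV::'a set)" using True by simp
  qed
  then show ?thesis using sv_lower[of A U0 i 0] assms True by auto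
qed

lemma sv_norm_le:
  fixes A :: "'a::euclidean_space \<Rightarrow> 'b::euclidean_space"
  assumes lin: "linear A"
  shows "norm (A x) \<le> singular_value A 1 * norm x"
proof (cases "x = 0")
  case True then show ?thesis using lin by (simp add: linear_0)
next
  case False
  have "norm (A x) / norm x \<le> singular_value A 1"
  proof (rule sv_lower[of A "span {x}"])
    show "dim (span {x}) = 1" using False by (simp add: dim_insert)
    show "1 \<le> DIM('a)" using DIM_positive by (simp add: Suc_le_eq)
    fix u assume "u \<in> span {x}"
    then obtain t where t: "u = t *\<^sub>R x" by (auto simp: span_singleton)
    show "norm (A x) / norm x * norm u \<le> norm (A u)"
      using False by (simp add: t linear_scale[OF lin])
  qed (use lin in auto)
  then show ?thesis using False by (simp add: divide_le_eq mult.commute)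
qed

lemma sv_le_sv1:
  fixes A :: "'a::euclidean_space \<Rightarrow> 'b::euclidean_space"
  assumes lin: "linear A"
  shows "singular_value A i \<le> singular_value A 1"
proof (cases "1 \<le> i")
  case False then have "singular_value A i = 0" unfolding singular_value_def by (intro if_not_P) simp
  then show ?thesis using sv_nonneg[OF lin] by simp
next
  case True
  show ?thesis
  proof (rule sv_upper)
    show "0 \<le> singular_value A 1" using sv_nonneg[OF lin] .
    fix U :: "'a set" assume U: "subspace U" "dim U = i"
    then obtain u where "u \<in> U" "norm u = 1" using sv_nonzero_in_subspace[of U] True by auto
    then show "\<exists>u\<in>U. norm u = 1 \<and> norm (A u) \<le> singular_value A 1"
      using sv_norm_le[OF lin, of u] by auto
  qed
qed


lemma quad_zero:
  fixes b K :: real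
  assumes H: "\<And>t. 0 \<le> 2*t*b + t^2*K"
  shows "b = 0"
proof -
  define D where "D = \<bar>K\<bar> + 1"
  have D: "D > 0" unfolding D_def by simp
  have "0 \<le> 2*(-b/D)*b + (-b/D)^2*K" using H .
  then have "0 \<le> D^2 * (2*(-b/D)*b + (-b/D)^2*K)" using D by simp
  also have "\<dots> = b^2 * (K - 2*D)" using D by (simp add: field_simps power2_eq_square)
  finally have "0 \<le> b^2 * (K - 2*D)" .
  moreover have "K - 2*D < 0" unfolding D_def by (cases "K \<ge> 0") auto
  ultimately have "b^2 \<le> 0" by (simp add: mult_le_0_iff zero_le_mult_iff)
  then show ?thesis by simp
qed

lemma svd_sub:
  fixes A :: "'a::euclidean_space \<Rightarrow> 'b::euclidean_space"
  assumes lin: "linear A"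
  shows "subspace V \<Longrightarrow> dim V = d \<Longrightarrow> \<exists>v. (\<forall>j\<in>{1..d}. v j \<in> V \<and> norm (v j) = 1)
     \<and> (\<forall>i\<in>{1..d}. \<forall>j\<in>{1..d}. i \<noteq> j \<longrightarrow> v i \<bullet> v j = 0 \<and> A (v i) \<bullet> A (v j) = 0)
     \<and> (\<forall>i\<in>{1..d}. \<forall>j\<in>{1..d}. i \<le> j \<longrightarrow> norm (A (v j)) \<le> norm (A (v i)))"
proof (induction d arbitrary: V)
  case 0 show ?case by auto
next
  case (Suc d)
  have "V \<inter> sphere 0 1 \<noteq> {}" using sv_nonzero_in_subspace[of V] Suc.prems by auto
  moreover have "compact (V \<inter> sphere 0 1)" using closed_subspace[OF Suc.prems(1)] compact_sphere by (rule closed_Int_compact)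
  moreover have "continuous_on (V \<inter> sphere 0 1) (\<lambda>x. norm (A x))"
    using lin by (intro continuous_on_norm linear_continuous_on) (simp add: linear_conv_bounded_linear)
  ultimately obtain x0 where x0V: "x0 \<in> V \<inter> sphere 0 1" and x0max: "\<forall>y\<in>V \<inter> sphere 0 1. norm (A y) \<le> norm (A x0)"
    using continuous_attains_sup by blast
  have x0: "x0 \<in> V" "norm x0 = 1" using x0V by auto
  define M where "M = norm (A x0)"
  have bound: "norm (A y) \<le> M * norm y" if "y \<in> V" for y
  proof (cases "y = 0")
    case True then show ?thesis using lin by (simp add: linear_0)
  next
    case False
    have "y /\<^sub>R norm y \<in> V \<inter> sphere 0 1" using that False Suc.prems(1) by (simp add: subspace_scale)
    then have "norm (A (y /\<^sub>R norm y)) \<le> M" using x0max M_def by blast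
    then have "norm (A y) / norm y \<le> M" using False by (simp add: linear_scale[OF lin] divide_inverse_commute)
    then show ?thesis using False by (simp add: divide_le_eq mult.commute)
  qed
  have orth: "A x0 \<bullet> A y = 0" if y: "y \<in> V" "x0 \<bullet> y = 0" for y
  proof -
    have "- (A x0 \<bullet> A y) = 0"
    proof (rule quad_zero)
      fix t :: real
      have zV: "x0 + t *\<^sub>R y \<in> V" using x0 y Suc.prems(1) by (simp add: subspace_add subspace_scale)
      have "(norm (A (x0 + t *\<^sub>R y)))^2 \<le> (M * norm (x0 + t *\<^sub>R y))^2"
        using bound[OF zV] by (simp add: power_mono)
      then have "(A x0 + t *\<^sub>R A y) \<bullet> (A x0 + t *\<^sub>R A y) \<le> M^2 * ((x0 + t *\<^sub>R y) \<bullet> (x0 + t *\<^sub>R y))"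
        by (simp add: power2_norm_eq_inner linear_add[OF lin] linear_scale[OF lin] power_mult_distrib)
      moreover have "x0 \<bullet> x0 = 1" using x0 by (simp add: norm_eq_1)
      moreover have "A x0 \<bullet> A x0 = M^2" unfolding M_def by (simp add: power2_norm_eq_inner)
      ultimately have "M^2 + 2*t*(A x0 \<bullet> A y) + t^2 * (A y \<bullet> A y) \<le> M^2 * (1 + t^2 * (y \<bullet> y))"
        using y by (simp add: inner_add_left inner_add_right inner_commute power2_eq_square algebra_simps)
      then show "0 \<le> 2*t*(- (A x0 \<bullet> A y)) + t^2 * (M^2 * (y \<bullet> y) - A y \<bullet> A y)"
        by (simp add: algebra_simps)
    qed
    then show ?thesis by simp
  qed
  define V' where "V' = {y \<in> V. \<forall>x \<in> span {x0}. orthogonal x y}"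
  have V'eq: "V' = V \<inter> {y. x0 \<bullet> y = 0}"
    unfolding V'_def by (auto simp: span_singleton orthogonal_def)
  have sV': "subspace V'" unfolding V'eq by (rule subspace_inter[OF Suc.prems(1) subspace_hyperplane])
  have "dim V' + dim (span {x0}) = dim V"
    unfolding V'_def using x0 Suc.prems(1)
    by (intro dim_subspace_orthogonal_to_vectors subspace_span span_minimal) auto
  moreover have "dim (span {x0}) = 1" using x0 by (auto simp: dim_insert)
  ultimately have dV': "dim V' = d" using Suc.prems(2) by simp
  obtain w where w1: "\<forall>j\<in>{1..d}. w j \<in> V' \<and> norm (w j) = 1"
    and w2: "\<forall>i\<in>{1..d}. \<forall>j\<in>{1..d}. i \<noteq> j \<longrightarrow> w i \<bullet> w j = 0 \<and> A (w i) \<bullet> A (w j) = 0"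
    and w3: "\<forall>i\<in>{1..d}. \<forall>j\<in>{1..d}. i \<le> j \<longrightarrow> norm (A (w j)) \<le> norm (A (w i))"
    using Suc.IH[OF sV' dV'] by blast
  have wV: "w j \<in> V" "x0 \<bullet> w j = 0" "norm (w j) = 1" if "j \<in> {1..d}" for j using w1 that unfolding V'eq by auto
  define v where "v j = (if j = 1 then x0 else w (j - 1))" for j
  have vdef2: "v j = w (j - 1)" "j - 1 \<in> {1..d}" if "j \<in> {1..Suc d}" "j \<noteq> 1" for j
    using that by (auto simp: v_def)
  have v1: "v 1 = x0" by (simp add: v_def)
  have orthw: "A x0 \<bullet> A (w k) = 0" "A (w k) \<bullet> A x0 = 0" if "k \<in> {1..d}" for k
    using orth[OF wV(1,2)[OF that]] by (auto simp: inner_commute)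
  show ?case
  proof (intro exI[of _ v] conjI ballI impI)
    fix j assume j: "j \<in> {1..Suc d}"
    show "v j \<in> V" using j x0 wV vdef2[OF j] by (cases "j = 1") (auto simp: v_def)
    show "norm (v j) = 1" using j x0 wV vdef2[OF j] by (cases "j = 1") (auto simp: v_def)
  next
    fix i j assume i: "i \<in> {1..Suc d}" and j: "j \<in> {1..Suc d}" and ij: "i \<noteq> j"
    show "v i \<bullet> v j = 0"
      using wV vdef2[OF i] vdef2[OF j] w2 ij v1 by (cases "i = 1"; cases "j = 1") (auto simp: inner_commute)
    show "A (v i) \<bullet> A (v j) = 0"
      using wV vdef2[OF i] vdef2[OF j] w2 ij v1 orthw by (cases "i = 1"; cases "j = 1") (auto simp: inner_commute)
  next
    fix i j assume i: "i \<in> {1..Suc d}" and j: "j \<in> {1..Suc d}" and ij: "i \<le> j"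
    have b: "norm (A (w k)) \<le> M" if "k \<in> {1..d}" for k using bound[OF wV(1)[OF that]] wV(3)[OF that] by simp
    show "norm (A (v j)) \<le> norm (A (v i))"
      using vdef2[OF i] vdef2[OF j] w3 ij v1 b M_def by (cases "i = 1"; cases "j = 1") auto
  qed
qed


definition onb :: "nat \<Rightarrow> (nat \<Rightarrow> 'a::real_inner) \<Rightarrow> bool" where
  "onb N v \<longleftrightarrow> (\<forall>j\<in>{1..N}. norm (v j) = 1) \<and> (\<forall>i\<in>{1..N}. \<forall>j\<in>{1..N}. i \<noteq> j \<longrightarrow> v i \<bullet> v j = 0)"

lemma sum_single:
  assumes "finite S" "i \<in> S" "\<And>j. j \<in> S \<Longrightarrow> j \<noteq> i \<Longrightarrow> f j = 0"
  shows "sum f S = f i"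
proof -
  have "sum f S = f i + sum f (S - {i})" using assms by (simp add: sum.remove)
  also have "sum f (S - {i}) = 0" using assms by (intro sum.neutral) auto
  finally show ?thesis by simp
qed

lemma onb_inj:
  assumes "onb N v" shows "inj_on v {1..N}"
proof (rule inj_onI)
  fix i j assume ij: "i \<in> {1..N}" "j \<in> {1..N}" "v i = v j"
  show "i = j"
  proof (rule ccontr)
    assume "i \<noteq> j"
    then have "v i \<bullet> v j = 0" using assms ij unfolding onb_def by blast
    moreover have "v i \<bullet> v i = 1" using assms ij unfolding onb_def by (simp add: norm_eq_1)
    ultimately show False using ij by simp
  qed
qed

lemma onb_indep:
  assumes "onb N v" "I \<subseteq> {1..N}" shows "independent (v ` I)"
proof (rule pairwise_orthogonal_independent)
  show "pairwise orthogonal (v ` I)"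
  proof (rule pairwiseI)
    fix x y assume "x \<in> v ` I" "y \<in> v ` I" "x \<noteq> y"
    then obtain i j where "i \<in> I" "j \<in> I" "x = v i" "y = v j" "i \<noteq> j" by blast
    then show "orthogonal x y" using assms unfolding onb_def orthogonal_def by blast
  qed
  show "0 \<notin> v ` I"
  proof
    assume "0 \<in> v ` I"
    then obtain i where i: "i \<in> I" "v i = 0" by force
    then have "norm (v i) = 1" using assms unfolding onb_def by blast
    then show False using i by simp
  qed
qed

lemma onb_dim:
  assumes "onb N v" "I \<subseteq> {1..N}" shows "dim (span (v ` I)) = card I"
proof -
  have "card (v ` I) = card I" using onb_inj[OF assms(1)] assms(2) by (meson card_image inj_on_subset)
  then show ?thesis using dim_span_eq_card_independent[OF onb_indep[OF assms]] by simp
qed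

lemma onb_span:
  fixes v :: "nat \<Rightarrow> 'a::euclidean_space"
  assumes "onb DIM('a) v" shows "span (v ` {1..DIM('a)}) = UNIV"
proof -
  have "UNIV \<subseteq> span (v ` {1..DIM('a)})"
  proof (rule card_ge_dim_independent)
    show "independent (v ` {1..DIM('a)})" using onb_indep[OF assms] by simp
    show "dim (UNIV::'a set) \<le> card (v ` {1..DIM('a)})"
      using card_image[OF onb_inj[OF assms]] by simp
  qed auto
  then show ?thesis by auto
qed

lemma onb_expand:
  fixes v :: "nat \<Rightarrow> 'a::euclidean_space"
  assumes o: "onb DIM('a) v" shows "x = (\<Sum>j=1..DIM('a). (x \<bullet> v j) *\<^sub>R v j)"
proof -
  define y where "y = x - (\<Sum>j=1..DIM('a). (x \<bullet> v j) *\<^sub>R v j)"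
  have yk: "y \<bullet> v k = 0" if k: "k \<in> {1..DIM('a)}" for k
  proof -
    have "(\<Sum>j=1..DIM('a). (x \<bullet> v j) *\<^sub>R v j) \<bullet> v k = (\<Sum>j=1..DIM('a). (x \<bullet> v j) * (v j \<bullet> v k))"
      by (simp add: inner_sum_left)
    also have "\<dots> = (x \<bullet> v k) * (v k \<bullet> v k)"
      by (rule sum_single) (use o k in \<open>auto simp: onb_def\<close>)
    also have "\<dots> = x \<bullet> v k" using o k by (simp add: onb_def norm_eq_1)
    finally show ?thesis unfolding y_def by (simp add: inner_diff_left)
  qed
  have "orthogonal y y"
    by (rule orthogonal_to_span[where S="v ` {1..DIM('a)}"]) (use onb_span[OF o] yk in \<open>auto simp: orthogonal_def\<close>)
  then have "y = 0" by (simp add: orthogonal_def)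
  then show ?thesis unfolding y_def by simp
qed

lemma onb_norm:
  fixes v :: "nat \<Rightarrow> 'a::euclidean_space" and A :: "'a \<Rightarrow> 'b::euclidean_space"
  assumes o: "onb DIM('a) v" and lin: "linear A"
    and Ao: "\<And>i j. i \<in> {1..DIM('a)} \<Longrightarrow> j \<in> {1..DIM('a)} \<Longrightarrow> i \<noteq> j \<Longrightarrow> A (v i) \<bullet> A (v j) = 0"
  shows "A x \<bullet> A x = (\<Sum>j=1..DIM('a). (x \<bullet> v j)^2 * (A (v j) \<bullet> A (v j)))"
proof -
  have Ax: "A x = (\<Sum>j=1..DIM('a). (x \<bullet> v j) *\<^sub>R A (v j))"
    using onb_expand[OF o, of x] by (metis (no_types, lifting) lin linear_scale linear_sum sum.cong)
  have "A x \<bullet> A x = (\<Sum>i=1..DIM('a). \<Sum>j=1..DIM('a). (x \<bullet> v i) * ((x \<bullet> v j) * (A (v j) \<bullet> A (v i))))"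
    unfolding Ax by (simp add: inner_sum_left inner_sum_right sum_distrib_left)
  also have "\<dots> = (\<Sum>i=1..DIM('a). (x \<bullet> v i) * ((x \<bullet> v i) * (A (v i) \<bullet> A (v i))))"
    by (rule sum.cong[OF refl], rule sum_single) (use Ao in auto)
  finally show ?thesis by (simp add: power2_eq_square mult.assoc)
qed

lemma onb_parseval:
  fixes v :: "nat \<Rightarrow> 'a::euclidean_space"
  assumes o: "onb DIM('a) v"
  shows "(norm x)^2 = (\<Sum>j=1..DIM('a). (x \<bullet> v j)^2)"
  using onb_norm[OF o linear_id, of x] o by (simp add: onb_def power2_norm_eq_inner norm_eq_1)

lemma subspace_meet:
  fixes U W :: "'a::euclidean_space set"
  assumes "subspace U" "subspace W" "DIM('a) < dim U + dim W"
  shows "\<exists>u\<in>U \<inter> W. norm u = 1"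
proof -
  have "dim {x + y |x y. x \<in> U \<and> y \<in> W} + dim (U \<inter> W) = dim U + dim W"
    using dim_sums_Int[OF assms(1,2)] .
  moreover have "dim {x + y |x y. x \<in> U \<and> y \<in> W} \<le> DIM('a)" by (rule dim_subset_UNIV)
  ultimately have "dim (U \<inter> W) \<ge> 1" using assms(3) by linarith
  then show ?thesis using sv_nonzero_in_subspace[of "U \<inter> W"] subspace_inter[OF assms(1,2)] by blast
qed



lemma svd_onb:
  fixes A :: "'a::euclidean_space \<Rightarrow> 'b::euclidean_space"
  assumes lin: "linear A"
  shows "\<exists>v. onb DIM('a) v \<and> (\<forall>i\<in>{1..DIM('a)}. \<forall>j\<in>{1..DIM('a)}. i \<noteq> j \<longrightarrow> A (v i) \<bullet> A (v j) = 0)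
     \<and> (\<forall>i\<in>{1..DIM('a)}. \<forall>j\<in>{1..DIM('a)}. i \<le> j \<longrightarrow> norm (A (v j)) \<le> norm (A (v i)))"
proof -
  obtain v where v1: "\<forall>j\<in>{1..DIM('a)}. v j \<in> UNIV \<and> norm (v j) = 1"
     and v2: "\<forall>i\<in>{1..DIM('a)}. \<forall>j\<in>{1..DIM('a)}. i \<noteq> j \<longrightarrow> v i \<bullet> v j = 0 \<and> A (v i) \<bullet> A (v j) = 0"
     and v3: "\<forall>i\<in>{1..DIM('a)}. \<forall>j\<in>{1..DIM('a)}. i \<le> j \<longrightarrow> norm (A (v j)) \<le> norm (A (v i))"
    using svd_sub[OF lin, of UNIV "DIM('a)"] by auto
  show ?thesis by (rule exI[of _ v]) (use v1 v2 v3 in \<open>auto simp: onb_def\<close>)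
qed

lemma cf:
  fixes A :: "'a::euclidean_space \<Rightarrow> 'b::euclidean_space"
  assumes lin: "linear A" and o: "onb DIM('a) v"
    and Ao: "\<forall>i\<in>{1..DIM('a)}. \<forall>j\<in>{1..DIM('a)}. i \<noteq> j \<longrightarrow> A (v i) \<bullet> A (v j) = 0"
    and srt: "\<forall>i\<in>{1..DIM('a)}. \<forall>j\<in>{1..DIM('a)}. i \<le> j \<longrightarrow> norm (A (v j)) \<le> norm (A (v i))"
    and i: "i \<in> {1..DIM('a)}"
  shows "subspace (span (v ` {1..i})) \<and> dim (span (v ` {1..i})) = i
           \<and> (\<forall>u\<in>span (v ` {1..i}). norm (A (v i)) * norm u \<le> norm (A u))"
    and "subspace {x. \<forall>j\<in>{1..<i}. x \<bullet> v j = 0} \<and> DIM('a) < dim {x. \<forall>j\<in>{1..<i}. x \<bullet> v j = 0} + i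
           \<and> (\<forall>x\<in>{x. \<forall>j\<in>{1..<i}. x \<bullet> v j = 0}. norm (A x) \<le> norm (A (v i)) * norm x)"
    and "singular_value A i = norm (A (v i))"
proof -
  define N where "N = DIM('a)"
  define a where "a = norm (A (v i))"
  have a0: "0 \<le> a" unfolding a_def by simp
  define U where "U = span (v ` {1..i})"
  define W where "W = {x. \<forall>j\<in>{1..<i}. x \<bullet> v j = 0}"
  have nrm: "norm (A x) ^ 2 = (\<Sum>j=1..N. (x \<bullet> v j)^2 * (norm (A (v j)))^2)" for x
    using onb_norm[OF o lin, of x] Ao unfolding N_def by (simp add: power2_norm_eq_inner)
  have pars: "norm x ^ 2 = (\<Sum>j=1..N. (x \<bullet> v j)^2)" for x
    using onb_parseval[OF o] unfolding N_def by simp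
  have sU: "subspace U" unfolding U_def by simp
  have dU: "dim U = i" unfolding U_def using onb_dim[OF o, of "{1..i}"] i by simp
  have lowU: "a * norm u \<le> norm (A u)" if u: "u \<in> U" for u
  proof -
    have zero: "u \<bullet> v j = 0" if j: "j \<in> {1..N}" "j > i" for j
    proof -
      have "orthogonal (v j) u"
      proof (rule orthogonal_to_span[where S="v ` {1..i}"])
        show "u \<in> span (v ` {1..i})" using u unfolding U_def .
        fix y assume "y \<in> v ` {1..i}"
        then obtain k where k: "k \<in> {1..i}" "y = v k" by blast
        then show "orthogonal (v j) y" using o j i unfolding onb_def orthogonal_def N_def by auto
      qed
      then show ?thesis by (simp add: orthogonal_def inner_commute)
    qed
    have "(a * norm u)^2 = (\<Sum>j=1..N. (u \<bullet> v j)^2 * a^2)"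
      by (simp add: power_mult_distrib pars sum_distrib_left mult.commute)
    also have "\<dots> \<le> (\<Sum>j=1..N. (u \<bullet> v j)^2 * (norm (A (v j)))^2)"
    proof (rule sum_mono)
      fix j assume j: "j \<in> {1..N}"
      show "(u \<bullet> v j)^2 * a^2 \<le> (u \<bullet> v j)^2 * (norm (A (v j)))^2"
      proof (cases "j \<le> i")
        case True
        then have "a \<le> norm (A (v j))" using srt i j unfolding a_def N_def by auto
        then show ?thesis by (intro mult_left_mono power_mono) (use a0 in auto)
      next
        case False then show ?thesis using zero[OF j] by simp
      qed
    qed
    also have "\<dots> = norm (A u) ^ 2" by (rule nrm[symmetric])
    finally show ?thesis by (rule power2_le_imp_le) simp
  qed
  have sW: "subspace W" unfolding W_def subspace_def by (auto simp: inner_add_left)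
  have "card {i..N} \<le> dim W"
  proof -
    have "card (v ` {i..N}) \<le> dim W"
    proof (rule independent_card_le_dim)
      show "v ` {i..N} \<subseteq> W"
      proof
        fix x assume "x \<in> v ` {i..N}"
        then obtain k where k: "k \<in> {i..N}" "x = v k" by blast
        then show "x \<in> W" using o i unfolding W_def onb_def N_def by auto
      qed
      show "independent (v ` {i..N})" using onb_indep[OF o, of "{i..N}"] i unfolding N_def by auto
    qed
    moreover have "card (v ` {i..N}) = card {i..N}"
      using onb_inj[OF o] i unfolding N_def by (intro card_image) (auto elim: inj_on_subset)
    ultimately show ?thesis by simp
  qed
  then have dW: "N < dim W + i" using i unfolding N_def by auto
  have upW: "norm (A x) \<le> a * norm x" if x: "x \<in> W" for x
  proof -
    have "norm (A x) ^ 2 = (\<Sum>j=1..N. (x \<bullet> v j)^2 * (norm (A (v j)))^2)" by (rule nrm)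
    also have "\<dots> \<le> (\<Sum>j=1..N. (x \<bullet> v j)^2 * a^2)"
    proof (rule sum_mono)
      fix j assume j: "j \<in> {1..N}"
      show "(x \<bullet> v j)^2 * (norm (A (v j)))^2 \<le> (x \<bullet> v j)^2 * a^2"
      proof (cases "j < i")
        case False
        then have "norm (A (v j)) \<le> a" using srt i j unfolding a_def N_def by auto
        then show ?thesis by (intro mult_left_mono power_mono) auto
      next
        case True then show ?thesis using x j unfolding W_def by simp
      qed
    qed
    also have "\<dots> = (a * norm x)^2"
      by (simp add: power_mult_distrib pars sum_distrib_left mult.commute)
    finally show ?thesis by (rule power2_le_imp_le) (use a0 in simp)
  qed
  show "subspace (span (v ` {1..i})) \<and> dim (span (v ` {1..i})) = i
           \<and> (\<forall>u\<in>span (v ` {1..i}). norm (A (v i)) * norm u \<le> norm (A u))"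
    using sU dU lowU unfolding U_def a_def by blast
  show "subspace {x. \<forall>j\<in>{1..<i}. x \<bullet> v j = 0} \<and> DIM('a) < dim {x. \<forall>j\<in>{1..<i}. x \<bullet> v j = 0} + i
           \<and> (\<forall>x\<in>{x. \<forall>j\<in>{1..<i}. x \<bullet> v j = 0}. norm (A x) \<le> norm (A (v i)) * norm x)"
    using sW dW upW unfolding W_def a_def N_def by blast
  show "singular_value A i = norm (A (v i))"
  proof (rule antisym)
    show "singular_value A i \<le> norm (A (v i))"
    proof (rule sv_upper)
      fix U' :: "'a set" assume U': "subspace U'" "dim U' = i"
      obtain u where u: "u \<in> U' \<inter> W" "norm u = 1"
        using subspace_meet[OF U'(1) sW] dW U'(2) unfolding N_def by auto
      then show "\<exists>u\<in>U'. norm u = 1 \<and> norm (A u) \<le> norm (A (v i))"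
        using upW[of u] unfolding a_def by auto
    qed simp
    show "norm (A (v i)) \<le> singular_value A i"
      using sv_lower[OF lin sU dU, of a] lowU i unfolding a_def by auto
  qed
qed


lemma sv_svd:
  fixes A :: "'a::euclidean_space \<Rightarrow> 'b::euclidean_space"
  assumes lin: "linear A"
  shows "\<exists>v. onb DIM('a) v \<and> (\<forall>i\<in>{1..DIM('a)}. \<forall>j\<in>{1..DIM('a)}. i \<noteq> j \<longrightarrow> A (v i) \<bullet> A (v j) = 0)
     \<and> (\<forall>i\<in>{1..DIM('a)}. \<forall>j\<in>{1..DIM('a)}. i \<le> j \<longrightarrow> norm (A (v j)) \<le> norm (A (v i)))
     \<and> (\<forall>i\<in>{1..DIM('a)}. singular_value A i = norm (A (v i)))"
proof -
  obtain v where v: "onb DIM('a) v" "\<forall>i\<in>{1..DIM('a)}. \<forall>j\<in>{1..DIM('a)}. i \<noteq> j \<longrightarrow> A (v i) \<bullet> A (v j) = 0"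
     "\<forall>i\<in>{1..DIM('a)}. \<forall>j\<in>{1..DIM('a)}. i \<le> j \<longrightarrow> norm (A (v j)) \<le> norm (A (v i))"
    using svd_onb[OF lin] by blast
  then show ?thesis using cf(3)[OF lin v] by (intro exI[of _ v]) simp
qed

lemma sv_low_space:
  fixes A :: "'a::euclidean_space \<Rightarrow> 'b::euclidean_space"
  assumes lin: "linear A" and i: "i \<in> {1..DIM('a)}"
  shows "\<exists>U. subspace U \<and> dim U = i \<and> (\<forall>u\<in>U. singular_value A i * norm u \<le> norm (A u))"
proof -
  obtain v where v: "onb DIM('a) v" "\<forall>i\<in>{1..DIM('a)}. \<forall>j\<in>{1..DIM('a)}. i \<noteq> j \<longrightarrow> A (v i) \<bullet> A (v j) = 0"
     "\<forall>i\<in>{1..DIM('a)}. \<forall>j\<in>{1..DIM('a)}. i \<le> j \<longrightarrow> norm (A (v j)) \<le> norm (A (v i))"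
    using svd_onb[OF lin] by blast
  have c1: "subspace (span (v ` {1..i})) \<and> dim (span (v ` {1..i})) = i
           \<and> (\<forall>u\<in>span (v ` {1..i}). norm (A (v i)) * norm u \<le> norm (A u))" using cf(1)[OF lin v i] .
  have c3: "singular_value A i = norm (A (v i))" using cf(3)[OF lin v i] .
  show ?thesis unfolding c3 using c1 by blast
qed

lemma sv_up_space:
  fixes A :: "'a::euclidean_space \<Rightarrow> 'b::euclidean_space"
  assumes lin: "linear A" and i: "i \<in> {1..DIM('a)}"
  shows "\<exists>W. subspace W \<and> DIM('a) < dim W + i \<and> (\<forall>x\<in>W. norm (A x) \<le> singular_value A i * norm x)"
proof -
  obtain v where v: "onb DIM('a) v" "\<forall>i\<in>{1..DIM('a)}. \<forall>j\<in>{1..DIM('a)}. i \<noteq> j \<longrightarrow> A (v i) \<bullet> A (v j) = 0"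
     "\<forall>i\<in>{1..DIM('a)}. \<forall>j\<in>{1..DIM('a)}. i \<le> j \<longrightarrow> norm (A (v j)) \<le> norm (A (v i))"
    using svd_onb[OF lin] by blast
  have c1: "subspace {x. \<forall>j\<in>{1..<i}. x \<bullet> v j = 0} \<and> DIM('a) < dim {x. \<forall>j\<in>{1..<i}. x \<bullet> v j = 0} + i
           \<and> (\<forall>x\<in>{x. \<forall>j\<in>{1..<i}. x \<bullet> v j = 0}. norm (A x) \<le> norm (A (v i)) * norm x)" using cf(2)[OF lin v i] .
  have c3: "singular_value A i = norm (A (v i))" using cf(3)[OF lin v i] .
  show ?thesis unfolding c3 using c1 by blast
qed

lemma sv_zero_beyond:
  fixes A :: "'a::euclidean_space \<Rightarrow> 'b::euclidean_space"
  assumes "\<not> (1 \<le> i \<and> i \<le> DIM('a))"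
  shows "singular_value A i = 0"
  unfolding singular_value_def using assms by (rule if_not_P)

lemma sv_comp_le:
  fixes T :: "'a::euclidean_space \<Rightarrow> 'b::euclidean_space" and S :: "'b \<Rightarrow> 'c::euclidean_space"
  assumes lT: "linear T" and lS: "linear S"
  shows "singular_value (S \<circ> T) i \<le> singular_value T 1 * singular_value S i"
proof (cases "1 \<le> i")
  case False
  then show ?thesis using sv_zero_beyond[of i S] sv_zero_beyond[of i "S \<circ> T"] by simp
next
  case i1: True
  define c where "c = singular_value T 1"
  have c0: "0 \<le> c" unfolding c_def by (rule sv_nonneg[OF lT])
  have s0: "0 \<le> singular_value S i" by (rule sv_nonneg[OF lS])
  show ?thesis unfolding c_def[symmetric]
  proof (rule sv_upper)
    show "0 \<le> c * singular_value S i" using c0 s0 by simp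
    fix U :: "'a set" assume U: "subspace U" "dim U = i"
    show "\<exists>u\<in>U. norm u = 1 \<and> norm ((S \<circ> T) u) \<le> c * singular_value S i"
    proof (cases "\<exists>u\<in>U. u \<noteq> 0 \<and> T u = 0")
      case True
      then obtain u where u: "u \<in> U" "u \<noteq> 0" "T u = 0" by blast
      have "u /\<^sub>R norm u \<in> U" using u U(1) by (simp add: subspace_scale)
      moreover have "T (u /\<^sub>R norm u) = 0" using u by (simp add: linear_scale[OF lT])
      ultimately show ?thesis using u c0 s0 lS by (intro bexI[of _ "u /\<^sub>R norm u"]) (auto simp: linear_0)
    next
      case False
      have inj: "inj_on T U"
      proof (rule inj_onI)
        fix x y assume xy: "x \<in> U" "y \<in> U" "T x = T y"
        then have "T (x - y) = 0" by (simp add: linear_diff[OF lT])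
        moreover have "x - y \<in> U" using xy U(1) by (simp add: subspace_diff)
        ultimately show "x = y" using False by auto
      qed
      have sTU: "subspace (T ` U)" using linear_subspace_image[OF lT U(1)] .
      have dTU: "dim (T ` U) = i"
        using dim_image_eq[OF lT, of U] inj U by (simp add: span_eq_iff[THEN iffD2])
      have iB: "i \<in> {1..DIM('b)}" using i1 dTU dim_subset_UNIV[of "T ` U"] by simp
      obtain W where W: "subspace W" "DIM('b) < dim W + i" "\<forall>x\<in>W. norm (S x) \<le> singular_value S i * norm x"
        using sv_up_space[OF lS iB] by blast
      obtain y where y: "y \<in> T ` U \<inter> W" "norm y = 1"
        using subspace_meet[OF sTU W(1)] W(2) dTU by auto
      then obtain u0 where u0: "u0 \<in> U" "y = T u0" by blast
      have u0nz: "u0 \<noteq> 0" using u0 y lT by (auto simp: linear_0)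
      define u where "u = u0 /\<^sub>R norm u0"
      have uU: "u \<in> U" "norm u = 1" using u0 u0nz U(1) by (auto simp: u_def subspace_scale)
      have Tu: "T u = y /\<^sub>R norm u0" using u0 by (simp add: u_def linear_scale[OF lT])
      have TuW: "T u \<in> W" using y W(1) Tu by (simp add: subspace_scale)
      have "norm (S (T u)) \<le> singular_value S i * norm (T u)" using W(3) TuW by blast
      also have "\<dots> \<le> singular_value S i * (c * norm u)"
        using sv_norm_le[OF lT, of u] s0 unfolding c_def by (intro mult_left_mono) auto
      finally show ?thesis using uU by (intro bexI[of _ u]) (auto simp: mult.commute)
    qed
  qed
qed



lemma adj_norm_le:
  fixes T :: "'a::euclidean_space \<Rightarrow> 'b::euclidean_space"
  assumes lT: "linear T"
  shows "norm (adjoint T y) \<le> singular_value T 1 * norm y"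
proof -
  define c where "c = singular_value T 1"
  have c0: "0 \<le> c" unfolding c_def by (rule sv_nonneg[OF lT])
  have "norm (adjoint T y) ^ 2 = T (adjoint T y) \<bullet> y"
    by (simp add: power2_norm_eq_inner adjoint_clauses[OF lT])
  also have "\<dots> \<le> norm (T (adjoint T y)) * norm y" by (rule norm_cauchy_schwarz)
  also have "\<dots> \<le> c * norm (adjoint T y) * norm y"
    using sv_norm_le[OF lT, of "adjoint T y"] unfolding c_def by (simp add: mult_right_mono)
  finally have *: "norm (adjoint T y) ^ 2 \<le> c * norm (adjoint T y) * norm y" .
  show ?thesis
  proof (cases "adjoint T y = 0")
    case True then show ?thesis using c0 unfolding c_def by simp
  next
    case False
    then have "norm (adjoint T y) > 0" by simp
    then show ?thesis using * unfolding c_def[symmetric] by (simp add: power2_eq_square mult.assoc)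
  qed
qed

lemma key:
  fixes T :: "'a::euclidean_space \<Rightarrow> 'b::euclidean_space"
  assumes lT: "linear T" and o: "onb DIM('b) w"
    and wc: "\<And>l. l \<in> {1..DIM('b)} \<Longrightarrow> norm (adjoint T (w l)) = singular_value T 1"
  shows "T (adjoint T y) = (singular_value T 1)^2 *\<^sub>R y"
proof -
  define c where "c = singular_value T 1"
  define B where "B = (\<lambda>x y. c^2 * (x \<bullet> y) - adjoint T x \<bullet> adjoint T y)"
  have lA: "linear (adjoint T)" by (rule adjoint_linear[OF lT])
  have Q: "0 \<le> B x x" for x
  proof -
    have "norm (adjoint T x) \<le> c * norm x" using adj_norm_le[OF lT] unfolding c_def .
    then have "norm (adjoint T x) ^ 2 \<le> (c * norm x) ^ 2" by (simp add: power_mono)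
    then show ?thesis unfolding B_def by (simp add: power2_norm_eq_inner power_mult_distrib)
  qed
  have Bz: "B (w l) y = 0" if l: "l \<in> {1..DIM('b)}" for l y
  proof (rule quad_zero)
    fix t :: real
    have w1: "w l \<bullet> w l = 1" using o l by (simp add: onb_def norm_eq_1)
    have wA: "adjoint T (w l) \<bullet> adjoint T (w l) = c^2" using wc[OF l] unfolding c_def[symmetric]
      by (simp add: power2_norm_eq_inner[symmetric])
    have "0 \<le> B (w l + t *\<^sub>R y) (w l + t *\<^sub>R y)" by (rule Q)
    also have "B (w l + t *\<^sub>R y) (w l + t *\<^sub>R y) = B (w l) (w l) + 2*t*B (w l) y + t^2 * B y y"
      unfolding B_def by (simp add: linear_add[OF lA] linear_scale[OF lA] inner_add_left inner_add_right
          inner_commute power2_eq_square algebra_simps)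
    also have "B (w l) (w l) = 0" unfolding B_def using w1 wA by simp
    finally show "0 \<le> 2*t*B (w l) y + t^2 * B y y" by simp
  qed
  define z where "z = c^2 *\<^sub>R y - T (adjoint T y)"
  have "z \<bullet> w l = 0" if l: "l \<in> {1..DIM('b)}" for l
    using Bz[OF l, of y] unfolding z_def B_def
    by (simp add: inner_diff_left inner_diff_right adjoint_clauses[OF lT] inner_commute)
  then have "z = 0" using onb_expand[OF o, of z] by simp
  then show ?thesis unfolding z_def c_def by simp
qed


lemma adj_iso:
  fixes T :: "'a::euclidean_space \<Rightarrow> 'b::euclidean_space"
  assumes lT: "linear T" and c: "c > 0" and TT: "\<And>y. T (adjoint T y) = c^2 *\<^sub>R y"
  shows "norm (adjoint T y) = c * norm y" and "inj (adjoint T)"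
proof -
  have "norm (adjoint T y) ^ 2 = y \<bullet> T (adjoint T y)"
    by (simp add: power2_norm_eq_inner adjoint_clauses[OF lT] inner_commute)
  also have "\<dots> = (c * norm y)^2" using TT[of y] by (simp add: power_mult_distrib power2_norm_eq_inner)
  finally show n: "norm (adjoint T y) = c * norm y" using c by (simp add: power2_eq_iff_nonneg)
  show "inj (adjoint T)"
  proof (rule injI)
    fix x y assume "adjoint T x = adjoint T y"
    then have "T (adjoint T x) = T (adjoint T y)" by simp
    then have "c^2 *\<^sub>R x = c^2 *\<^sub>R y" using TT by simp
    then show "x = y" using c by simp
  qed
qed

lemma sv_last_ge:
  fixes T :: "'a::euclidean_space \<Rightarrow> 'b::euclidean_space"
  assumes lT: "linear T" and c: "c > 0" and TT: "\<And>y. T (adjoint T y) = c^2 *\<^sub>R y"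
  shows "c \<le> singular_value T DIM('b)"
proof -
  have lA: "linear (adjoint T)" by (rule adjoint_linear[OF lT])
  have inj: "inj (adjoint T)" using adj_iso[OF lT c TT] by blast
  have dU: "dim (range (adjoint T)) = DIM('b)"
    using dim_image_eq[OF lA, of UNIV] inj by (simp add: inj_on_def)
  have le: "DIM('b) \<le> DIM('a)" using dim_subset_UNIV[of "range (adjoint T)"] dU by simp
  show ?thesis
  proof (rule sv_lower[OF lT _ dU])
    show "subspace (range (adjoint T))" using linear_subspace_image[OF lA subspace_UNIV] .
    show "1 \<le> DIM('b)" using DIM_positive[where 'a='b] by linarith
    show "DIM('b) \<le> DIM('a)" by (rule le)
    fix u assume "u \<in> range (adjoint T)"
    then obtain y where y: "u = adjoint T y" by blast
    have "norm (T u) = c^2 * norm y" using TT[of y] c y by simp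
    also have "\<dots> = c * norm u" using adj_iso(1)[OF lT c TT, of y] y by (simp add: power2_eq_square)
    finally show "c * norm u \<le> norm (T u)" by simp
  qed
qed

lemma comp_ge:
  fixes T :: "'a::euclidean_space \<Rightarrow> 'b::euclidean_space" and S :: "'b \<Rightarrow> 'c::euclidean_space"
  assumes lT: "linear T" and lS: "linear S" and c: "c > 0" and TT: "\<And>y. T (adjoint T y) = c^2 *\<^sub>R y"
    and i: "i \<in> {1..DIM('b)}"
  shows "c * singular_value S i \<le> singular_value (S \<circ> T) i"
proof -
  have lA: "linear (adjoint T)" by (rule adjoint_linear[OF lT])
  have inj: "inj (adjoint T)" using adj_iso[OF lT c TT] by blast
  obtain V where V: "subspace V" "dim V = i" "\<forall>u\<in>V. singular_value S i * norm u \<le> norm (S u)"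
    using sv_low_space[OF lS i] by blast
  have dU: "dim (adjoint T ` V) = i"
    using dim_image_eq[OF lA, of V] inj V(2) by (simp add: inj_on_def)
  have le: "i \<le> DIM('a)" using dim_subset_UNIV[of "adjoint T ` V"] dU by simp
  show ?thesis
  proof (rule sv_lower[OF linear_compose[OF lT lS] _ dU])
    show "subspace (adjoint T ` V)" using linear_subspace_image[OF lA V(1)] .
    show "1 \<le> i" using i by simp
    show "i \<le> DIM('a)" by (rule le)
    fix u assume "u \<in> adjoint T ` V"
    then obtain y where y: "u = adjoint T y" "y \<in> V" by blast
    have "c * singular_value S i * norm u = c^2 * (singular_value S i * norm y)"
      using adj_iso(1)[OF lT c TT, of y] y by (simp add: power2_eq_square algebra_simps)
    also have "\<dots> \<le> c^2 * norm (S y)" using V(3) y(2) by (simp add: mult_left_mono)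
    also have "\<dots> = norm ((S \<circ> T) u)" using TT[of y] y by (simp add: linear_scale[OF lS])
    finally show "c * singular_value S i * norm u \<le> norm ((S \<circ> T) u)" .
  qed
qed

lemma frob:
  fixes T :: "'a::euclidean_space \<Rightarrow> 'b::euclidean_space" and S :: "'b \<Rightarrow> 'c::euclidean_space"
  assumes lT: "linear T" and lS: "linear S" and u: "onb DIM('a) u" and w: "onb DIM('b) w"
    and Sw: "\<forall>i\<in>{1..DIM('b)}. \<forall>j\<in>{1..DIM('b)}. i \<noteq> j \<longrightarrow> S (w i) \<bullet> S (w j) = 0"
  shows "(\<Sum>j=1..DIM('a). norm (S (T (u j)))^2) = (\<Sum>l=1..DIM('b). norm (S (w l))^2 * norm (adjoint T (w l))^2)"
proof -
  have "(\<Sum>j=1..DIM('a). norm (S (T (u j)))^2) = (\<Sum>j=1..DIM('a). \<Sum>l=1..DIM('b). (u j \<bullet> adjoint T (w l))^2 * norm (S (w l))^2)"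
  proof (rule sum.cong[OF refl])
    fix j
    show "norm (S (T (u j)))^2 = (\<Sum>l=1..DIM('b). (u j \<bullet> adjoint T (w l))^2 * norm (S (w l))^2)"
      using onb_norm[OF w lS, of "T (u j)"] Sw
      by (simp add: power2_norm_eq_inner adjoint_clauses[OF lT])
  qed
  also have "\<dots> = (\<Sum>l=1..DIM('b). \<Sum>j=1..DIM('a). (adjoint T (w l) \<bullet> u j)^2 * norm (S (w l))^2)"
    by (subst sum.swap) (simp add: inner_commute)
  also have "\<dots> = (\<Sum>l=1..DIM('b). norm (S (w l))^2 * norm (adjoint T (w l))^2)"
  proof (rule sum.cong[OF refl])
    fix l
    show "(\<Sum>j=1..DIM('a). (adjoint T (w l) \<bullet> u j)^2 * norm (S (w l))^2) = norm (S (w l))^2 * norm (adjoint T (w l))^2"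
      using onb_parseval[OF u, of "adjoint T (w l)"] by (simp add: sum_distrib_left[symmetric] mult.commute)
  qed
  finally show ?thesis .
qed


lemma TT_of_eq:
  fixes T :: "'a::euclidean_space \<Rightarrow> 'b::euclidean_space"
  assumes lT: "linear T" and eq: "singular_value T 1 = singular_value T DIM('b)"
    and c: "singular_value T 1 > 0"
  shows "T (adjoint T y) = (singular_value T 1)^2 *\<^sub>R y"
proof -
  define c where "c = singular_value T 1"
  have cpos: "c > 0" using c unfolding c_def .
  have le: "DIM('b) \<le> DIM('a)"
  proof (rule ccontr)
    assume "\<not> DIM('b) \<le> DIM('a)"
    then have "singular_value T DIM('b) = 0" by (intro sv_zero_beyond) simp
    then show False using eq c by simp
  qed
  obtain v where o: "onb DIM('a) v" and Tv: "\<forall>i\<in>{1..DIM('a)}. \<forall>j\<in>{1..DIM('a)}. i \<noteq> j \<longrightarrow> T (v i) \<bullet> T (v j) = 0"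
     and srt: "\<forall>i\<in>{1..DIM('a)}. \<forall>j\<in>{1..DIM('a)}. i \<le> j \<longrightarrow> norm (T (v j)) \<le> norm (T (v i))"
     and sv: "\<forall>i\<in>{1..DIM('a)}. singular_value T i = norm (T (v i))"
    using sv_svd[OF lT] by blast
  have mpos: "1 \<le> DIM('b)" using DIM_positive[where 'a='b] by linarith
  have Tvl: "norm (T (v l)) = c" if l: "l \<in> {1..DIM('b)}" for l
  proof (rule antisym)
    show "norm (T (v l)) \<le> c" using sv_le_sv1[OF lT, of l] sv l le unfolding c_def by auto
    have "norm (T (v (DIM('b)))) \<le> norm (T (v l))" using srt l le by auto
    then show "c \<le> norm (T (v l))" using sv le mpos eq unfolding c_def by auto
  qed
  define w where "w l = (1/c) *\<^sub>R T (v l)" for l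
  have ow: "onb DIM('b) w" unfolding onb_def
  proof (intro conjI ballI impI)
    fix j assume j: "j \<in> {1..DIM('b)}"
    show "norm (w j) = 1" using Tvl[OF j] cpos by (simp add: w_def)
  next
    fix i j assume i: "i \<in> {1..DIM('b)}" and j: "j \<in> {1..DIM('b)}" and ij: "i \<noteq> j"
    show "w i \<bullet> w j = 0" using Tv i j ij le by (auto simp: w_def)
  qed
  have wc: "norm (adjoint T (w l)) = singular_value T 1" if l: "l \<in> {1..DIM('b)}" for l
  proof (rule antisym)
    show "norm (adjoint T (w l)) \<le> singular_value T 1"
      using adj_norm_le[OF lT, of "w l"] ow l by (simp add: onb_def)
    have "w l \<bullet> T (v l) = c"
      using Tvl[OF l] cpos by (simp add: w_def power2_norm_eq_inner[symmetric] power2_eq_square)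
    then have eqc: "adjoint T (w l) \<bullet> v l = c" by (simp add: adjoint_clauses[OF lT])
    have "c \<le> norm (adjoint T (w l)) * norm (v l)"
      using norm_cauchy_schwarz[of "adjoint T (w l)" "v l"] eqc by simp
    moreover have "norm (v l) = 1" using o l le by (simp add: onb_def)
    ultimately show "singular_value T 1 \<le> norm (adjoint T (w l))" unfolding c_def by simp
  qed
  show ?thesis by (rule key[OF lT ow wc])
qed

lemma termwise_eq:
  fixes T :: "'a::euclidean_space \<Rightarrow> 'b::euclidean_space" and S :: "'b \<Rightarrow> 'c::euclidean_space"
  assumes lT: "linear T" and lS: "linear S" and eq: "singular_value T 1 = singular_value T DIM('b)"
  shows "singular_value (S \<circ> T) i = singular_value T 1 * singular_value S i"
proof -
  define c where "c = singular_value T 1"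
  have c0: "0 \<le> c" unfolding c_def by (rule sv_nonneg[OF lT])
  have up: "singular_value (S \<circ> T) i \<le> c * singular_value S i" using sv_comp_le[OF lT lS] unfolding c_def .
  have lo0: "0 \<le> singular_value (S \<circ> T) i" by (rule sv_nonneg[OF linear_compose[OF lT lS]])
  show ?thesis unfolding c_def[symmetric]
  proof (cases "c = 0")
    case True then show "singular_value (S \<circ> T) i = c * singular_value S i" using up lo0 by simp
  next
    case False
    then have cpos: "c > 0" using c0 by simp
    have TT: "T (adjoint T y) = c^2 *\<^sub>R y" for y using TT_of_eq[OF lT eq] cpos unfolding c_def by simp
    show "singular_value (S \<circ> T) i = c * singular_value S i"
    proof (cases "i \<in> {1..DIM('b)}")
      case True
      then show ?thesis using comp_ge[OF lT lS cpos TT True] up by simp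
    next
      case False
      then have "singular_value S i = 0" by (intro sv_zero_beyond) simp
      then show ?thesis using up lo0 by simp
    qed
  qed
qed

lemma forward:
  fixes T :: "'a::euclidean_space \<Rightarrow> 'b::euclidean_space" and S :: "'b \<Rightarrow> 'c::euclidean_space"
  assumes lT: "linear T" and lS: "linear S" and injS: "inj S" and c: "singular_value T 1 > 0"
    and tw: "\<And>i. i \<in> {1..max DIM('a) DIM('b)} \<Longrightarrow> singular_value (S \<circ> T) i = singular_value T 1 * singular_value S i"
  shows "singular_value T 1 = singular_value T DIM('b)"
proof -
  define c where "c = singular_value T 1"
  have cpos: "c > 0" using c unfolding c_def .
  obtain w where ow: "onb DIM('b) w" and Sw: "\<forall>i\<in>{1..DIM('b)}. \<forall>j\<in>{1..DIM('b)}. i \<noteq> j \<longrightarrow> S (w i) \<bullet> S (w j) = 0"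
     and svS: "\<forall>i\<in>{1..DIM('b)}. singular_value S i = norm (S (w i))"
    using sv_svd[OF lS] by blast
  have spos: "singular_value S l > 0" if l: "l \<in> {1..DIM('b)}" for l
  proof -
    have "norm (w l) = 1" using ow l by (auto simp: onb_def)
    then have "w l \<noteq> 0" by auto
    then have "S (w l) \<noteq> 0" using injS lS by (metis injD linear_0)
    then show ?thesis using svS l by simp
  qed
  have mpos: "1 \<le> DIM('b)" using DIM_positive[where 'a='b] by linarith
  show ?thesis
  proof (cases "DIM('b) \<le> DIM('a)")
    case False
    then have "singular_value (S \<circ> T) DIM('b) = 0" by (intro sv_zero_beyond) simp
    moreover have "singular_value (S \<circ> T) DIM('b) = c * singular_value S DIM('b)"
      using tw[of "DIM('b)"] mpos unfolding c_def by simp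
    moreover have "c * singular_value S DIM('b) > 0" using cpos spos[of "DIM('b)"] mpos by simp
    ultimately show ?thesis by linarith
  next
    case le: True
    obtain u where ou: "onb DIM('a) u" and svST: "\<forall>i\<in>{1..DIM('a)}. singular_value (S \<circ> T) i = norm ((S \<circ> T) (u i))"
      using sv_svd[OF linear_compose[OF lT lS]] by blast
    have "(\<Sum>l=1..DIM('b). norm (S (w l))^2 * norm (adjoint T (w l))^2)
          = (\<Sum>j=1..DIM('a). norm (S (T (u j)))^2)"
      using frob[OF lT lS ou ow Sw] by simp
    also have "\<dots> = (\<Sum>j=1..DIM('a). (c * singular_value S j)^2)"
    proof (rule sum.cong[OF refl])
      fix j assume j: "j \<in> {1..DIM('a)}"
      then show "norm (S (T (u j)))^2 = (c * singular_value S j)^2"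
        using svST tw[of j] unfolding c_def by auto
    qed
    also have "\<dots> = (\<Sum>j=1..DIM('b). (c * singular_value S j)^2)"
    proof (rule sum.mono_neutral_right)
      show "{1..DIM('b)} \<subseteq> {1..DIM('a)}" using le by auto
      show "\<forall>i\<in>{1..DIM('a)} - {1..DIM('b)}. (c * singular_value S i)^2 = 0"
        by (auto intro: sv_zero_beyond)
    qed simp
    also have "\<dots> = (\<Sum>l=1..DIM('b). norm (S (w l))^2 * c^2)"
      using svS by (intro sum.cong) (auto simp: power_mult_distrib)
    finally have "(\<Sum>l=1..DIM('b). norm (S (w l))^2 * (c^2 - norm (adjoint T (w l))^2)) = 0"
      by (simp add: algebra_simps sum_subtractf)
    moreover have nn: "0 \<le> norm (S (w l))^2 * (c^2 - norm (adjoint T (w l))^2)" if l: "l \<in> {1..DIM('b)}" for l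
    proof -
      have "norm (adjoint T (w l)) \<le> c * norm (w l)" using adj_norm_le[OF lT] unfolding c_def .
      also have "norm (w l) = 1" using ow l by (simp add: onb_def)
      finally have "norm (adjoint T (w l))^2 \<le> c^2" by (simp add: power_mono)
      then show ?thesis by simp
    qed
    ultimately have z: "\<forall>l\<in>{1..DIM('b)}. norm (S (w l))^2 * (c^2 - norm (adjoint T (w l))^2) = 0"
      using sum_nonneg_eq_0_iff[of "{1..DIM('b)}" "\<lambda>l. norm (S (w l))^2 * (c^2 - norm (adjoint T (w l))^2)"] by blast
    have wc: "norm (adjoint T (w l)) = singular_value T 1" if l: "l \<in> {1..DIM('b)}" for l
    proof -
      have "norm (S (w l)) \<noteq> 0" using spos[OF l] svS l by simp
      then have "norm (adjoint T (w l))^2 = c^2" using z l by force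
      then show ?thesis using cpos unfolding c_def by (simp add: power2_eq_iff_nonneg)
    qed
    have TT: "T (adjoint T y) = c^2 *\<^sub>R y" for y using key[OF lT ow wc] unfolding c_def .
    have "c \<le> singular_value T DIM('b)" by (rule sv_last_ge[OF lT cpos TT])
    moreover have "singular_value T DIM('b) \<le> c" unfolding c_def by (rule sv_le_sv1[OF lT])
    ultimately show ?thesis unfolding c_def by simp
  qed
qed


lemma sum_ext:
  fixes h :: "nat \<Rightarrow> real"
  assumes "K \<le> N" "\<And>i. K < i \<Longrightarrow> h i = 0"
  shows "(\<Sum>i=1..K. h i) = (\<Sum>i=1..N. h i)"
  by (rule sum.mono_neutral_left) (use assms in auto)

lemma powr_inv_cancel:
  fixes x r :: real
  assumes "0 \<le> x" "r > 0"
  shows "(x powr r) powr (1/r) = x" and "(x powr (1/r)) powr r = x"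
  using assms by (simp_all add: powr_powr powr_one)

theorem main_gen:
  fixes T :: "'a::euclidean_space \<Rightarrow> 'b::euclidean_space" and S :: "'b \<Rightarrow> 'c::euclidean_space" and p :: ereal
  assumes lT: "linear T" and lS: "linear S" and p1: "1 \<le> p"
  shows "schatten_norm p (S \<circ> T) \<le> singular_value T 1 * schatten_norm p S
    \<and> ((inj S \<and> p < \<infinity>) \<longrightarrow>
        (schatten_norm p (S \<circ> T) = singular_value T 1 * schatten_norm p S
          \<longleftrightarrow> singular_value T 1 = singular_value T DIM('b)))"
proof -
  define c where "c = singular_value T 1"
  define f where "f i = singular_value (S \<circ> T) i" for i
  define s where "s i = singular_value S i" for i
  define N where "N = max DIM('a) DIM('b)"
  have c0: "0 \<le> c" unfolding c_def by (rule sv_nonneg[OF lT])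
  have f0: "0 \<le> f i" for i unfolding f_def by (rule sv_nonneg[OF linear_compose[OF lT lS]])
  have s0: "0 \<le> s i" for i unfolding s_def by (rule sv_nonneg[OF lS])
  have fle: "f i \<le> c * s i" for i unfolding f_def c_def s_def by (rule sv_comp_le[OF lT lS])
  show ?thesis
  proof (cases "p = \<infinity>")
    case True
    then show ?thesis using fle[of 1] unfolding schatten_norm_def f_def c_def s_def by simp
  next
    case False
    obtain r where pr: "p = ereal r" using False p1 by (cases p) auto
    have r1: "1 \<le> r" using p1 pr by simp
    have rpos: "r > 0" using r1 by simp
    define FA where "FA = (\<Sum>i=1..N. f i powr r)"
    define SS where "SS = (\<Sum>i=1..N. s i powr r)"
    define G where "G = (\<Sum>i=1..N. (c * s i) powr r)"
    have FA0: "0 \<le> FA" unfolding FA_def by (intro sum_nonneg) simp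
    have SS0: "0 \<le> SS" unfolding SS_def by (intro sum_nonneg) simp
    have lhs: "schatten_norm p (S \<circ> T) = FA powr (1/r)"
    proof -
      have "(\<Sum>i=1..DIM('a). f i powr r) = FA" unfolding FA_def
        by (rule sum_ext) (auto simp: N_def f_def intro!: sv_zero_beyond)
      then show ?thesis unfolding schatten_norm_def using False pr by (simp add: f_def)
    qed
    have rhs: "schatten_norm p S = SS powr (1/r)"
    proof -
      have "(\<Sum>i=1..DIM('b). s i powr r) = SS" unfolding SS_def
        by (rule sum_ext) (auto simp: N_def s_def intro!: sv_zero_beyond)
      then show ?thesis unfolding schatten_norm_def using False pr by (simp add: s_def)
    qed
    have G_eq: "G = c powr r * SS" unfolding G_def SS_def by (simp add: powr_mult sum_distrib_left)
    have cG: "c * schatten_norm p S = G powr (1/r)"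
      unfolding rhs G_eq using c0 SS0 rpos by (simp add: powr_mult powr_inv_cancel)
    have FAG: "FA \<le> G" unfolding FA_def G_def
      by (intro sum_mono powr_mono2) (use rpos f0 fle in auto)
    have ineq: "schatten_norm p (S \<circ> T) \<le> c * schatten_norm p S"
      unfolding lhs cG using FAG FA0 rpos by (intro powr_mono2) auto
    have eqv: "schatten_norm p (S \<circ> T) = c * schatten_norm p S \<longleftrightarrow> c = singular_value T DIM('b)"
      if injS: "inj S"
    proof
      assume eq: "c = singular_value T DIM('b)"
      have "f i = c * s i" for i unfolding f_def s_def c_def using termwise_eq[OF lT lS] eq unfolding c_def by simp
      then have "FA = G" unfolding FA_def G_def by simp
      then show "schatten_norm p (S \<circ> T) = c * schatten_norm p S" unfolding lhs cG by simp
    next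
      assume eq: "schatten_norm p (S \<circ> T) = c * schatten_norm p S"
      then have "FA powr (1/r) = G powr (1/r)" unfolding lhs cG .
      then have "(FA powr (1/r)) powr r = (G powr (1/r)) powr r" by simp
      moreover have "0 \<le> G" using FA0 FAG by linarith
      ultimately have FAeqG: "FA = G" using FA0 rpos by (simp add: powr_inv_cancel)
      have "(\<Sum>i=1..N. (c * s i) powr r - f i powr r) = 0"
        using FAeqG unfolding FA_def G_def by (simp add: sum_subtractf)
      moreover have "0 \<le> (c * s i) powr r - f i powr r" for i
        using powr_mono2[of r "f i" "c * s i"] rpos f0 fle by simp
      ultimately have "\<forall>i\<in>{1..N}. (c * s i) powr r - f i powr r = 0"
        using sum_nonneg_eq_0_iff[of "{1..N}" "\<lambda>i. (c * s i) powr r - f i powr r"] by blast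
      then have tw: "f i = c * s i" if "i \<in> {1..N}" for i
      proof -
        have "((c * s i) powr r) powr (1/r) = (f i powr r) powr (1/r)" using that \<open>\<forall>i\<in>{1..N}. _\<close> by simp
        then show ?thesis using powr_inv_cancel(1)[OF f0 rpos] powr_inv_cancel(1)[of "c * s i" r] c0 s0 rpos by simp
      qed
      show "c = singular_value T DIM('b)"
      proof (cases "c = 0")
        case True
        then show ?thesis using sv_le_sv1[OF lT, of "DIM('b)"] sv_nonneg[OF lT, of "DIM('b)"] unfolding c_def by simp
      next
        case False
        then have "singular_value T 1 > 0" using c0 unfolding c_def by simp
        then show ?thesis unfolding c_def
          by (rule forward[OF lT lS injS]) (use tw in \<open>auto simp: f_def s_def c_def N_def\<close>)
      qed
    qed
    show ?thesis using ineq eqv unfolding c_def by blast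
  qed
qed


theorem lemma3p6:
  fixes T :: "real^'n \<Rightarrow> real^'m" and S :: "real^'m \<Rightarrow> real^'k" and p :: ereal
  assumes "linear T" and "linear S" and "1 \<le> p"
  shows "schatten_norm p (S \<circ> T) \<le> singular_value T 1 * schatten_norm p S
    \<and> ((inj S \<and> p < \<infinity>) \<longrightarrow>
        (schatten_norm p (S \<circ> T) = singular_value T 1 * schatten_norm p S
          \<longleftrightarrow> singular_value T 1 = singular_value T CARD('m)))"
proof -
  have d: "DIM(real^'m) = CARD('m)" by simp
  show ?thesis using main_gen[OF assms] unfolding d .
qed

end
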